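(* Let $\Lambda\subset\mathbb{R}^6$ be a lattice and $Q\in\mathrm{SO}(6)$ with $Q\Lambda=\Lambda$ and $Q^N=\mathbb{1}$, and let $\mathcal{P}=\mathbb{Z}_N=\langle\theta\rangle$ act on $\mathbb{R}^6$ by $\theta\mapsto Q$. Assume that for every $k\in\mathbb{Z}$ the fixed subspace $\mathrm{Fix}(Q^k)=\{x\in\mathbb{R}^6: Q^kx=x\}$ has dimension $0$, $2$ or $6$. Let $\mathcal{O}\subseteq\mathcal{P}^2$ be the $\mathcal{N}=2$ sector. Then $\mathcal{O}$ is closed under the action $\ast$ of $\mathrm{SL}(2,\mathbb{Z})$, and in particular under every subgroup of $\mathrm{SL}(2,\mathbb{Z})$. Moreover, all elements of a minimally closed subset of $\mathcal{O}$ fix the same plane, i.e. there is a single two-dimensional subspace $E$ such that every nontrivial component $g$ or $h$ of every element $(g,h)$ of that subset satisfies $\mathrm{Fix}(g)=E$.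
   Context: The action of $V=\begin{pmatrix} a&b\\c&d\end{pmatrix}\in\mathrm{SL}(2,\mathbb{Z})$ on $\mathcal{P}^2$ is $(g,h)\ast V=(g^ah^{-c},g^{-b}h^d)$. The $\mathcal{N}=2$ sector is the set of pairs $(g,h)\in\mathcal{P}^2$ with $(g,h)\neq(1,1)$ for which there is a two-dimensional subspace $E\subset\mathbb{R}^6$ (a fixed plane) such that each of $g,h$ is either the identity or has fixed subspace exactly $E$ ("$g$ and $h$ fix the same plane"). A subset is closed under a group $G$ if it is mapped into itself by every $V\in G$; a closed set is minimally closed if it is nonempty and contains no nonempty proper closed subset. *)

theory Defs
  imports "HOL-Analysis.Analysis"
begin

primrec mpow :: "real^'n^'n \<Rightarrow> nat \<Rightarrow> real^'n^'n" where
  "mpow A 0 = mat 1"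
| "mpow A (Suc k) = A ** mpow A k"

definition is_lattice :: "(real^6) set \<Rightarrow> bool" where
  "is_lattice L \<longleftrightarrow>
     (\<exists>B :: real^6^6. invertible B \<and>
        L = range (\<lambda>z :: int^6. B *v (\<chi> i. real_of_int (z $ i))))"

definition SL2Z :: "(int^2^2) set" where
  "SL2Z = {V. det V = 1}"

definition is_subgroup_SL2Z :: "(int^2^2) set \<Rightarrow> bool" where
  "is_subgroup_SL2Z G \<longleftrightarrow> G \<subseteq> SL2Z \<and> mat 1 \<in> G \<and>
     (\<forall>A\<in>G. \<forall>B\<in>G. A ** B \<in> G) \<and> (\<forall>A\<in>G. \<exists>B\<in>G. A ** B = mat 1)"

(* The point group P = Z_N = <theta>, written additively: theta^k is represented
   by k in {0..<N}; the identity is 0. *)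
definition PG :: "nat \<Rightarrow> int set" where
  "PG N = {0..<int N}"

definition fixsp :: "real^6^6 \<Rightarrow> int \<Rightarrow> (real^6) set" where
  "fixsp Q k = {x. mpow Q (nat k) *v x = x}"

(* (g,h) * V = (g^a h^(-c), g^(-b) h^d), additively in Z_N *)
definition act :: "nat \<Rightarrow> int^2^2 \<Rightarrow> int \<times> int \<Rightarrow> int \<times> int" where
  "act N V p = (let a = V$1$1; b = V$1$2; c = V$2$1; d = V$2$2; g = fst p; h = snd p
                in ((a * g - c * h) mod int N, (- b * g + d * h) mod int N))"

definition fix_plane :: "real^6^6 \<Rightarrow> (real^6) set \<Rightarrow> int \<times> int \<Rightarrow> bool" where
  "fix_plane Q E p \<longleftrightarrow> (fst p \<noteq> 0 \<longrightarrow> fixsp Q (fst p) = E) \<and> (snd p \<noteq> 0 \<longrightarrow> fixsp Q (snd p) = E)"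

definition N2_sector :: "real^6^6 \<Rightarrow> nat \<Rightarrow> (int \<times> int) set" where
  "N2_sector Q N = {p \<in> PG N \<times> PG N. p \<noteq> (0,0) \<and>
      (\<exists>E. subspace E \<and> dim E = 2 \<and> fix_plane Q E p)}"

definition closed_under :: "nat \<Rightarrow> (int^2^2) set \<Rightarrow> (int \<times> int) set \<Rightarrow> bool" where
  "closed_under N G S \<longleftrightarrow> (\<forall>V\<in>G. \<forall>p\<in>S. act N V p \<in> S)"

definition minimally_closed :: "nat \<Rightarrow> (int^2^2) set \<Rightarrow> (int \<times> int) set \<Rightarrow> bool" where
  "minimally_closed N G S \<longleftrightarrow> S \<noteq> {} \<and> closed_under N G S \<and>
     (\<forall>T. T \<subseteq> S \<and> T \<noteq> {} \<and> closed_under N G T \<longrightarrow> T = S)"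

end

theory Submission
  imports Defs
begin

lemma mpow_add: "mpow A (m+n) = mpow A m ** mpow A n"
  by (induction m) (auto simp: matrix_mul_assoc)

lemma mpow_mulN: "mpow A N = mat 1 \<Longrightarrow> mpow A (N*q) = mat 1"
  by (induction q) (simp_all add: mpow_add)

lemma mpow_mod: "mpow A N = mat 1 \<Longrightarrow> mpow A n = mpow A (n mod N)"
proof -
  assume h: "mpow A N = mat 1"
  have "mpow A n = mpow A (N * (n div N) + n mod N)" by simp
  also have "\<dots> = mpow A (N * (n div N)) ** mpow A (n mod N)" by (rule mpow_add)
  also have "\<dots> = mpow A (n mod N)" by (simp add: mpow_mulN[OF h])
  finally show ?thesis .
qed

lemma subspace_fix: "subspace {x. (A::real^'n^'n) *v x = x}"
  unfolding subspace_def
  by (auto simp: matrix_vector_right_distrib matrix_vector_mult_scaleR)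

lemma comb_fix:
  fixes Q :: "real^'n^'n" and N :: nat
  assumes QN: "mpow Q N = mat 1" and Npos: "N > 0"
    and g: "mpow Q (nat (g mod int N)) *v x = x"
    and h: "mpow Q (nat (h mod int N)) *v x = x"
  shows "mpow Q (nat ((a*g + c*h) mod int N)) *v x = x"
proof -
  define P where "P z \<longleftrightarrow> mpow Q (nat (z mod int N)) *v x = x" for z
  have add: "P (u+v)" if "P u" "P v" for u v
  proof -
    have e: "nat ((u+v) mod int N) = (nat (u mod int N) + nat (v mod int N)) mod N"
    proof -
      have "int (nat ((u+v) mod int N)) = (u+v) mod int N" using Npos by simp
      also have "\<dots> = (u mod int N + v mod int N) mod int N" by (simp add: mod_add_eq)
      also have "\<dots> = int ((nat (u mod int N) + nat (v mod int N)) mod N)"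
        using Npos by (simp add: zmod_int)
      finally show ?thesis by linarith
    qed
    have "mpow Q (nat ((u+v) mod int N)) = mpow Q (nat (u mod int N) + nat (v mod int N))"
      using mpow_mod[OF QN] e by metis
    then show ?thesis using that unfolding P_def
      by (simp add: mpow_add matrix_vector_mul_assoc[symmetric])
  qed
  have neg: "P (-u)" if "P u" for u
  proof -
    have e: "(nat ((-u) mod int N) + nat (u mod int N)) mod N = 0"
    proof -
      have "int ((nat ((-u) mod int N) + nat (u mod int N)) mod N)
            = ((-u) mod int N + u mod int N) mod int N"
        using Npos by (simp add: zmod_int)
      also have "\<dots> = 0" by (simp add: mod_add_eq)
      finally show ?thesis by simp
    qed
    have "x = mpow Q (nat ((-u) mod int N) + nat (u mod int N)) *v x"
      using mpow_mod[OF QN, of "nat ((-u) mod int N) + nat (u mod int N)"] e by simp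
    also have "\<dots> = mpow Q (nat ((-u) mod int N)) *v x"
      using that unfolding P_def by (simp add: mpow_add matrix_vector_mul_assoc[symmetric])
    finally show ?thesis unfolding P_def by simp
  qed
  have zero: "P 0" unfolding P_def by simp
  have natmul: "P (int n * u)" if "P u" for u n
    by (induction n) (auto simp: zero distrib_right intro: add that)
  have mul: "P (k * u)" if "P u" for u k
  proof (cases "k \<ge> 0")
    case True then show ?thesis using natmul[OF that, of "nat k"] by simp
  next
    case False then show ?thesis using neg[OF natmul[OF that, of "nat (-k)"]] by simp
  qed
  have "P g" "P h" using g h unfolding P_def by auto
  then show ?thesis using add mul unfolding P_def by blast
qed

lemma core:
  fixes Q :: "real^6^6" and N :: nat
  assumes QN: "mpow Q N = mat 1" and Npos: "N > 0"
    and faithful: "\<forall>k. 0 < k \<and> k < N \<longrightarrow> mpow Q k \<noteq> mat 1"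
    and fixdim: "\<forall>k. dim {x. mpow Q k *v x = x} \<in> {0, 2, 6}"
    and E: "subspace E" "dim E = 2"
    and fp: "fix_plane Q E (g,h)"
    and gr: "0 \<le> g" "g < int N" and hr: "0 \<le> h" "h < int N"
    and k0: "(a*g + c*h) mod int N \<noteq> 0"
  shows "fixsp Q ((a*g + c*h) mod int N) = E"
proof -
  let ?k = "(a*g + c*h) mod int N"
  have gx: "mpow Q (nat (g mod int N)) *v x = x" if x: "x \<in> E" for x
  proof (cases "g = 0")
    case True then show ?thesis by simp
  next
    case False
    then have "fixsp Q g = E" using fp unfolding fix_plane_def by auto
    thus ?thesis using x gr unfolding fixsp_def by auto
  qed
  have hx: "mpow Q (nat (h mod int N)) *v x = x" if x: "x \<in> E" for x
  proof (cases "h = 0")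
    case True then show ?thesis by simp
  next
    case False
    then have "fixsp Q h = E" using fp unfolding fix_plane_def by auto
    thus ?thesis using x hr unfolding fixsp_def by auto
  qed
  have sub: "E \<subseteq> fixsp Q ?k"
    unfolding fixsp_def using comb_fix[OF QN Npos gx hx] by auto
  have sf: "subspace (fixsp Q ?k)" unfolding fixsp_def by (rule subspace_fix)
  have "dim (fixsp Q ?k) \<ge> 2" using dim_subset[OF sub] E by simp
  moreover have "dim (fixsp Q ?k) \<in> {0,2,6}" using fixdim unfolding fixsp_def by blast
  moreover have "dim (fixsp Q ?k) \<noteq> 6"
  proof
    assume "dim (fixsp Q ?k) = 6"
    hence "span (fixsp Q ?k) = UNIV" using dim_eq_full[where 'a="real^6"] by simp
    hence "fixsp Q ?k = UNIV" using span_eq_iff sf by metis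
    hence "\<forall>x. mpow Q (nat ?k) *v x = mat 1 *v x" unfolding fixsp_def by auto
    hence "mpow Q (nat ?k) = mat 1" using matrix_eq by blast
    moreover have "0 < nat ?k" "nat ?k < N" using k0 Npos
      by (auto simp: nat_less_iff) (smt (verit) pos_mod_sign of_nat_0_less_iff)
    ultimately show False using faithful by blast
  qed
  ultimately have "dim (fixsp Q ?k) = 2" by (simp del: dim_eq_0)
  hence "span E = span (fixsp Q ?k)" using dim_eq_span[OF sub] E by simp
  thus ?thesis using span_eq_iff sf E by metis
qed

lemma act_step:
  fixes Q :: "real^6^6" and N :: nat
  assumes QN: "mpow Q N = mat 1" and Npos: "N > 0"
    and faithful: "\<forall>k. 0 < k \<and> k < N \<longrightarrow> mpow Q k \<noteq> mat 1"
    and fixdim: "\<forall>k. dim {x. mpow Q k *v x = x} \<in> {0, 2, 6}"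
    and E: "subspace E" "dim E = 2"
    and V: "V \<in> SL2Z"
    and p: "p \<in> PG N \<times> PG N" "p \<noteq> (0,0)" "fix_plane Q E p"
  shows "act N V p \<in> PG N \<times> PG N \<and> act N V p \<noteq> (0,0) \<and> fix_plane Q E (act N V p)"
proof -
  obtain g h where gh: "p = (g,h)" by force
  have gr: "0 \<le> g" "g < int N" "0 \<le> h" "h < int N" using p gh by (auto simp: PG_def)
  define a where "a = V$1$1"
  define b where "b = V$1$2"
  define c where "c = V$2$1"
  define d where "d = V$2$2"
  have det: "a*d - b*c = 1" using V unfolding SL2Z_def a_def b_def c_def d_def
    by (simp add: det_2)
  have actp: "act N V p = ((a*g + (-c)*h) mod int N, ((-b)*g + d*h) mod int N)"
    unfolding act_def Let_def gh a_def b_def c_def d_def by simp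
  have fp: "fix_plane Q E (g,h)" using p gh by simp
  have c1: "fixsp Q ((a*g + (-c)*h) mod int N) = E" if "(a*g + (-c)*h) mod int N \<noteq> 0"
    using core[OF QN Npos faithful fixdim E fp gr that] .
  have c2: "fixsp Q (((-b)*g + d*h) mod int N) = E" if "((-b)*g + d*h) mod int N \<noteq> 0"
    using core[OF QN Npos faithful fixdim E fp gr that] .
  have nz: "act N V p \<noteq> (0,0)"
  proof
    assume "act N V p = (0,0)"
    hence d1: "int N dvd (a*g + (-c)*h)" and d2: "int N dvd ((-b)*g + d*h)"
      using actp by (auto simp: mod_eq_0_iff_dvd)
    have "int N dvd d*(a*g + (-c)*h) + c*((-b)*g + d*h)" using d1 d2 by simp
    moreover have "d*(a*g + (-c)*h) + c*((-b)*g + d*h) = g"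
    proof -
      have "d*(a*g + (-c)*h) + c*((-b)*g + d*h) = (a*d - b*c)*g" by (simp add: algebra_simps)
      then show ?thesis using det by simp
    qed
    ultimately have "int N dvd g" by simp
    hence g0: "g = 0" using gr by (metis order_le_less zdvd_not_zless) 
    have "int N dvd b*(a*g + (-c)*h) + a*((-b)*g + d*h)" using d1 d2 by simp
    moreover have "b*(a*g + (-c)*h) + a*((-b)*g + d*h) = h"
    proof -
      have "b*(a*g + (-c)*h) + a*((-b)*g + d*h) = (a*d - b*c)*h" by (simp add: algebra_simps)
      then show ?thesis using det by simp
    qed
    ultimately have "int N dvd h" by simp
    hence "h = 0" using gr by (metis order_le_less zdvd_not_zless)
    then show False using g0 p gh by simp
  qed
  have "act N V p \<in> PG N \<times> PG N" using actp Npos by (auto simp: PG_def)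
  moreover have "fix_plane Q E (act N V p)" using actp c1 c2 unfolding fix_plane_def by auto
  ultimately show ?thesis using nz by blast
qed


theorem theorem2p9:
  fixes L :: "(real^6) set" and Q :: "real^6^6" and N :: nat
  assumes lattice: "is_lattice L"
    and SO6: "orthogonal_matrix Q" "det Q = 1"
    and QL: "(\<lambda>x. Q *v x) ` L = L"
    and Npos: "N > 0"
    and QN: "mpow Q N = mat 1"
    and faithful: "\<forall>k. 0 < k \<and> k < N \<longrightarrow> mpow Q k \<noteq> mat 1"
    and fixdim: "\<forall>k. dim {x. mpow Q k *v x = x} \<in> {0, 2, 6}"
  shows "closed_under N SL2Z (N2_sector Q N)
       \<and> (\<forall>G. is_subgroup_SL2Z G \<longrightarrow> closed_under N G (N2_sector Q N))
       \<and> (\<forall>G S. is_subgroup_SL2Z G \<and> S \<subseteq> N2_sector Q N \<and> minimally_closed N G S \<longrightarrow>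
            (\<exists>E. subspace E \<and> dim E = 2 \<and> (\<forall>p\<in>S. fix_plane Q E p)))"
proof -
  note step = act_step[OF QN Npos faithful fixdim]
  have C: "closed_under N SL2Z (N2_sector Q N)"
    unfolding closed_under_def
  proof (intro ballI)
    fix V p assume V: "V \<in> SL2Z" and p: "p \<in> N2_sector Q N"
    then obtain E where E: "subspace E" "dim E = 2" "fix_plane Q E p"
      and pp: "p \<in> PG N \<times> PG N" "p \<noteq> (0,0)" unfolding N2_sector_def by blast
    show "act N V p \<in> N2_sector Q N"
      using step[OF E(1,2) V pp E(3)] E(1,2) unfolding N2_sector_def by blast
  qed
  have C2: "\<forall>G. is_subgroup_SL2Z G \<longrightarrow> closed_under N G (N2_sector Q N)"
    using C unfolding is_subgroup_SL2Z_def closed_under_def by blast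
  have C3: "\<exists>E. subspace E \<and> dim E = 2 \<and> (\<forall>p\<in>S. fix_plane Q E p)"
    if G: "is_subgroup_SL2Z G" and S: "S \<subseteq> N2_sector Q N" and M: "minimally_closed N G S" for G S
  proof -
    from M obtain p0 where p0: "p0 \<in> S" unfolding minimally_closed_def by blast
    then obtain E where E: "subspace E" "dim E = 2" "fix_plane Q E p0"
      using S unfolding N2_sector_def by blast
    define T where "T = {p \<in> S. fix_plane Q E p}"
    have "closed_under N G T" unfolding closed_under_def
    proof (intro ballI)
      fix V p assume V: "V \<in> G" and p: "p \<in> T"
      have VS: "V \<in> SL2Z" using V G unfolding is_subgroup_SL2Z_def by blast
      have pS: "p \<in> S" using p T_def by simp
      have "act N V p \<in> S" using M V pS unfolding minimally_closed_def closed_under_def by blast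
      moreover have "p \<in> PG N \<times> PG N" "p \<noteq> (0,0)" using pS S unfolding N2_sector_def by auto
      ultimately show "act N V p \<in> T"
        using step[OF E(1,2) VS] p unfolding T_def by blast
    qed
    moreover have "T \<subseteq> S" "T \<noteq> {}" using p0 E unfolding T_def by blast+
    ultimately have "T = S" using M unfolding minimally_closed_def by blast
    then show ?thesis using E unfolding T_def by blast
  qed
  show ?thesis using C C2 C3 by blast
qed

end
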